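(* Let $k$ be a field of characteristic zero, let $n\ge 1$ and $R=k[x_1,\ldots,x_n]$. Let $\mathfrak{D}$ be a set of pairwise commuting $k$-derivations of $R$ such that $R$ is $\mathfrak{D}$-simple and $\partial_{x_1},\ldots,\partial_{x_{n-1}}\in\mathfrak{D}$, and assume the Jacobian Conjecture holds in $n$ variables over $k$. Then there exists $d\in\mathfrak{D}$ such that $\{\partial_{x_1},\ldots,\partial_{x_{n-1}},d\}$ is a locally nilpotent commutative basis of the $R$-module $\mathrm{Der}_k(R)$. In particular, $d$ is locally nilpotent.
   Context: $\mathrm{Der}_k(R)$ is the (free) $R$-module of all $k$-derivations of $R$ (i.e. $k$-linear maps satisfying the Leibniz rule). A commutative basis of $\mathrm{Der}_k(R)$ is an $R$-basis consisting of pairwise commuting derivations; it is locally nilpotent if each of its elements $d$ is locally nilpotent, i.e. for every $f\in R$ there is $m\ge 1$ with $d^m(f)=0$. $R$ is $\mathfrak{D}$-simple if its only ideals $I$ with $d(I)\subseteq I$ for all $d\in\mathfrak{D}$ are $0$ and $R$. The Jacobian Conjecture in $n$ variables over $k$ asserts: if $F=(F_1,\ldots,F_n)\in k[x_1,\ldots,x_n]^n$ has Jacobian matrix $(\partial F_i/\partial x_j)$ invertible over $k[x_1,\ldots,x_n]$, then $F$ has a polynomial inverse. *)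

theory Defs
  imports "HOL-Library.Poly_Mapping"
begin

text \<open>The polynomial ring k[x_v | v :: 'v] over a field k, with the (finitely many)
  variables indexed by a finite type 'v (so n = CARD('v) \<ge> 1).\<close>

type_synonym ('v, 'k) mpoly = "('v \<Rightarrow>\<^sub>0 nat) \<Rightarrow>\<^sub>0 'k"

definition const_poly :: "'k::comm_ring_1 \<Rightarrow> ('v, 'k) mpoly" where
  "const_poly c = Poly_Mapping.single 0 c"

definition var_poly :: "'v \<Rightarrow> ('v, 'k::comm_ring_1) mpoly" where
  "var_poly v = Poly_Mapping.single (Poly_Mapping.single v 1) 1"

definition pderiv_var :: "'v \<Rightarrow> ('v, 'k::comm_ring_1) mpoly \<Rightarrow> ('v, 'k) mpoly" where
  "pderiv_var v p = Abs_poly_mapping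
     (\<lambda>m :: 'v \<Rightarrow>\<^sub>0 nat. of_nat (Poly_Mapping.lookup m v + 1) * Poly_Mapping.lookup p (m + Poly_Mapping.single v 1))"

definition is_derivation :: "(('v, 'k::comm_ring_1) mpoly \<Rightarrow> ('v, 'k) mpoly) \<Rightarrow> bool" where
  "is_derivation d \<longleftrightarrow>
     (\<forall>p q. d (p + q) = d p + d q) \<and>
     (\<forall>c p. d (const_poly c * p) = const_poly c * d p) \<and>
     (\<forall>p q. d (p * q) = p * d q + q * d p)"

definition locally_nilpotent :: "('a::zero \<Rightarrow> 'a) \<Rightarrow> bool" where
  "locally_nilpotent d \<longleftrightarrow> (\<forall>f. \<exists>m\<ge>1. (d ^^ m) f = 0)"

definition is_ideal :: "'a::comm_ring_1 set \<Rightarrow> bool" where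
  "is_ideal I \<longleftrightarrow> 0 \<in> I \<and> (\<forall>a\<in>I. \<forall>b\<in>I. a + b \<in> I) \<and> (\<forall>r. \<forall>a\<in>I. r * a \<in> I)"

definition D_simple :: "('a::comm_ring_1 \<Rightarrow> 'a) set \<Rightarrow> bool" where
  "D_simple D \<longleftrightarrow>
     (\<forall>I. is_ideal I \<and> (\<forall>d\<in>D. d ` I \<subseteq> I) \<longrightarrow> I = {0} \<or> I = UNIV)"

definition is_Der_basis ::
    "('v::finite \<Rightarrow> (('v, 'k::comm_ring_1) mpoly \<Rightarrow> ('v, 'k) mpoly)) \<Rightarrow> bool" where
  "is_Der_basis B \<longleftrightarrow>
     (\<forall>v. is_derivation (B v)) \<and>
     (\<forall>E. is_derivation E \<longrightarrow>
        (\<exists>!f :: 'v \<Rightarrow> ('v, 'k) mpoly. E = (\<lambda>p. \<Sum>v\<in>UNIV. f v * B v p)))"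

definition locally_nilpotent_commutative_basis ::
    "('v::finite \<Rightarrow> (('v, 'k::comm_ring_1) mpoly \<Rightarrow> ('v, 'k) mpoly)) \<Rightarrow> bool" where
  "locally_nilpotent_commutative_basis B \<longleftrightarrow>
     is_Der_basis B \<and> (\<forall>u w. B u \<circ> B w = B w \<circ> B u) \<and> (\<forall>v. locally_nilpotent (B v))"

definition peval :: "('v \<Rightarrow> ('w, 'k::comm_ring_1) mpoly) \<Rightarrow> ('v, 'k) mpoly \<Rightarrow> ('w, 'k) mpoly" where
  "peval G p = (\<Sum>m\<in>Poly_Mapping.keys p. const_poly (Poly_Mapping.lookup p m) * (\<Prod>v\<in>Poly_Mapping.keys m. G v ^ Poly_Mapping.lookup m v))"

definition jacobian :: "('v \<Rightarrow> ('v, 'k::comm_ring_1) mpoly) \<Rightarrow> 'v \<Rightarrow> 'v \<Rightarrow> ('v, 'k) mpoly" where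
  "jacobian F i j = pderiv_var j (F i)"

definition invertible_matrix :: "('v::finite \<Rightarrow> 'v \<Rightarrow> 'a::comm_ring_1) \<Rightarrow> bool" where
  "invertible_matrix A \<longleftrightarrow> (\<exists>B. (\<forall>i j. (\<Sum>l\<in>UNIV. A i l * B l j) = (if i = j then 1 else 0)) \<and>
                                 (\<forall>i j. (\<Sum>l\<in>UNIV. B i l * A l j) = (if i = j then 1 else 0)))"

definition jacobian_conjecture :: "'v::finite itself \<Rightarrow> 'k::field itself \<Rightarrow> bool" where
  "jacobian_conjecture _ _ \<longleftrightarrow>
     (\<forall>F :: 'v \<Rightarrow> ('v, 'k) mpoly. invertible_matrix (jacobian F) \<longrightarrow>
        (\<exists>G :: 'v \<Rightarrow> ('v, 'k) mpoly.
           (\<forall>v. peval F (G v) = var_poly v) \<and> (\<forall>v. peval G (F v) = var_poly v)))"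

end

theory Submission
  imports Defs
begin


lemma pm_sum_single:
  fixes p :: "'a \<Rightarrow>\<^sub>0 'b::comm_monoid_add"
  shows "(\<Sum>m\<in>Poly_Mapping.keys p. Poly_Mapping.single m (Poly_Mapping.lookup p m)) = p"
proof (rule poly_mapping_eqI)
  fix k
  show "Poly_Mapping.lookup (\<Sum>m\<in>Poly_Mapping.keys p. Poly_Mapping.single m (Poly_Mapping.lookup p m)) k = Poly_Mapping.lookup p k"
    by (cases "k \<in> Poly_Mapping.keys p")
       (auto simp: lookup_sum lookup_single when_def in_keys_iff)
qed

lemma lookup_single_mult:
  fixes w :: "('a::cancel_comm_monoid_add) \<Rightarrow>\<^sub>0 'b::comm_semiring_1"
  shows "Poly_Mapping.lookup (Poly_Mapping.single m c * w) (m + y) = c * Poly_Mapping.lookup w y"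
  by (simp add: lookup_mult lookup_single when_mult Sum_any_right_distrib[symmetric] mult_when)




abbreviation lk where "lk \<equiv> Poly_Mapping.lookup"
abbreviation sg where "sg \<equiv> Poly_Mapping.single"
abbreviation ks where "ks \<equiv> Poly_Mapping.keys"

lemma lookup_pderiv:
  "lk (pderiv_var v p) m = of_nat (lk m v + 1) * lk p (m + sg v 1)"
proof -
  have "{m. of_nat (lk m v + 1) * lk p (m + sg v 1) \<noteq> 0} \<subseteq> (\<lambda>m. m + sg v 1) -` ks p"
    by (auto simp: in_keys_iff)
  moreover have "finite ((\<lambda>m. m + sg v 1) -` ks p)"
    by (rule finite_vimageI) (auto simp: inj_def)
  ultimately have "finite {m. of_nat (lk m v + 1) * lk p (m + sg v 1) \<noteq> 0}"
    by (rule finite_subset)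
  then show ?thesis unfolding pderiv_var_def by simp
qed

lemma pderiv_add: "pderiv_var v (p + q) = pderiv_var v p + pderiv_var v q"
  by (rule poly_mapping_eqI) (simp add: lookup_pderiv lookup_add distrib_left)

lemma pderiv_zero[simp]: "pderiv_var v 0 = 0"
  by (rule poly_mapping_eqI) (simp add: lookup_pderiv)

lemma pderiv_sum: "pderiv_var v (sum f A) = (\<Sum>a\<in>A. pderiv_var v (f a))"
  by (induction A rule: infinite_finite_induct) (auto simp: pderiv_add)

lemma lookup_const_mult: "lk (const_poly c * p) m = c * lk p m"
  using lookup_single_mult[of 0 c p m] by (simp add: const_poly_def)

lemma pderiv_const_mult: "pderiv_var v (const_poly c * p) = const_poly c * pderiv_var v p"
  by (rule poly_mapping_eqI) (simp add: lookup_pderiv lookup_const_mult del: const_poly_def; simp add: mult_ac)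

lemma pm_minus_add:
  fixes a :: "'v \<Rightarrow>\<^sub>0 nat"
  assumes "lk a v \<noteq> 0" shows "a - sg v 1 + sg v 1 = a"
  by (rule poly_mapping_eqI) (use assms in \<open>auto simp: lookup_add lookup_minus lookup_single when_def\<close>)

lemma pm_add_minus:
  fixes a :: "'v \<Rightarrow>\<^sub>0 nat"
  assumes "lk b v \<noteq> 0" shows "a + b - sg v 1 = a + (b - sg v 1)"
  by (rule poly_mapping_eqI) (use assms in \<open>auto simp: lookup_add lookup_minus lookup_single when_def\<close>)

lemma pderiv_single:
  "pderiv_var v (sg a c) = (if lk a v = 0 then 0 else sg (a - sg v 1) (of_nat (lk a v) * c))"
proof (rule poly_mapping_eqI)
  fix m
  show "lk (pderiv_var v (sg a c)) m = lk (if lk a v = 0 then 0 else sg (a - sg v 1) (of_nat (lk a v) * c)) m"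
  proof (cases "lk a v = 0")
    case True
    have "a \<noteq> m + sg v 1" using True by (auto simp: lookup_add)
    then show ?thesis using True by (simp add: lookup_pderiv lookup_single when_def)
  next
    case False
    have e: "(a = m + sg v 1) \<longleftrightarrow> (a - sg v 1 = m)"
      using pm_minus_add[OF False] by (metis add_diff_cancel_right')
    have "a = m + sg v 1 \<Longrightarrow> lk m v + 1 = lk a v" by (simp add: lookup_add)
    then show ?thesis using False e by (auto simp: lookup_pderiv lookup_single when_def) (metis of_nat_Suc)
  qed
qed




lemma poly_induct:
  fixes p :: "('v, 'k::comm_ring_1) mpoly"
  assumes "P 0" "\<And>p q. P p \<Longrightarrow> P q \<Longrightarrow> P (p + q)" "\<And>m c. P (sg m c)"
  shows "P p"
proof -
  have "P (\<Sum>m\<in>A. sg m (lk p m))" if "finite A" for A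
    using that by (induction A rule: finite_induct) (auto intro: assms)
  then show ?thesis using pm_sum_single[of p] by (metis finite_keys)
qed

lemma pderiv_mono_mono:
  "pderiv_var v (sg a c * sg b e) = sg a c * pderiv_var v (sg b e) + sg b e * pderiv_var v (sg a c)"
proof -
  have s: "sg a c * sg b e = sg (a + b) (c * e)" by (simp add: mult_single)
  consider "lk a v = 0" "lk b v = 0" | "lk a v = 0" "lk b v \<noteq> 0" | "lk a v \<noteq> 0" "lk b v = 0"
    | "lk a v \<noteq> 0" "lk b v \<noteq> 0" by blast
  then show ?thesis
  proof cases
    case 1 then show ?thesis unfolding s by (simp add: pderiv_single lookup_add)
  next
    case 2
    have "a + b - sg v 1 = a + (b - sg v 1)" by (rule pm_add_minus) (use 2 in auto)
    with 2 show ?thesis unfolding s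
      by (simp add: pderiv_single lookup_add mult_single mult_ac)
  next
    case 3
    have "b + a - sg v 1 = b + (a - sg v 1)" by (rule pm_add_minus) (use 3 in auto)
    with 3 show ?thesis unfolding s
      by (simp add: pderiv_single lookup_add mult_single add.commute[of a b] mult_ac)
  next
    case 4
    have "a + b - sg v 1 = a + (b - sg v 1)" by (rule pm_add_minus) (use 4 in auto)
    moreover have "a + b - sg v 1 = b + (a - sg v 1)" using pm_add_minus[of a v b] 4 by (simp add: add.commute)
    ultimately show ?thesis using 4 unfolding s
      by (simp add: pderiv_single lookup_add mult_single  algebra_simps flip: single_add)
  qed
qed

lemma pderiv_mult: "pderiv_var v (p * q) = p * pderiv_var v q + q * pderiv_var v p"
proof -
  have mono: "pderiv_var v (sg a c * q) = sg a c * pderiv_var v q + q * pderiv_var v (sg a c)" for a c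
    by (induction q rule: poly_induct)
       (auto simp: pderiv_mono_mono pderiv_add algebra_simps)
  show ?thesis
  proof (induction p rule: poly_induct)
    case 1 then show ?case by simp
  next
    case (2 p1 p2) then show ?case by (simp add: distrib_right pderiv_add algebra_simps)
  next
    case (3 m c) show ?case by (rule mono)
  qed
qed

lemma is_derivation_pderiv: "is_derivation (pderiv_var v)"
  unfolding is_derivation_def by (intro conjI allI) (rule pderiv_add, rule pderiv_const_mult, rule pderiv_mult)




lemma der_add: "is_derivation d \<Longrightarrow> d (p + q) = d p + d q"
  unfolding is_derivation_def by blast
lemma der_mult: "is_derivation d \<Longrightarrow> d (p * q) = p * d q + q * d p"
  unfolding is_derivation_def by blast
lemma der_cmult: "is_derivation d \<Longrightarrow> d (const_poly c * p) = const_poly c * d p"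
  unfolding is_derivation_def by blast
lemma der_zero[simp]: "is_derivation d \<Longrightarrow> d 0 = 0"
  using der_add[of d 0 0] by simp
lemma der_one: "is_derivation d \<Longrightarrow> d 1 = 0"
  using der_mult[of d 1 1] by simp
lemma der_const: "is_derivation d \<Longrightarrow> d (const_poly c) = 0"
  using der_cmult[of d c 1] der_one[of d] by simp
lemma der_minus: "is_derivation d \<Longrightarrow> d (- p) = - d p"
  using der_add[of d p "-p"] by (metis der_zero neg_eq_iff_add_eq_0 add.right_inverse)
lemma der_diff: "is_derivation d \<Longrightarrow> d (p - q) = d p - d q"
  using der_add[of d p "-q"] der_minus[of d q] by simp
lemma der_sum: "is_derivation d \<Longrightarrow> d (sum f A) = (\<Sum>a\<in>A. d (f a))"
  by (induction A rule: infinite_finite_induct) (auto simp: der_add)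

lemma const_mult_const: "const_poly a * const_poly b = const_poly (a * b)"
  by (simp add: const_poly_def mult_single)
lemma const_one: "const_poly 1 = 1"
  by (simp add: const_poly_def)
lemma const_zero: "const_poly 0 = 0"
  by (simp add: const_poly_def)
lemma const_add: "const_poly (a + b) = const_poly a + const_poly b"
  by (simp add: const_poly_def single_add)

lemma var_pow: "var_poly v ^ k = sg (sg v k) (1::'k::comm_ring_1)"
  by (induction k) (auto simp: var_poly_def mult_single simp flip: single_add)

lemma prod_single1: "finite A \<Longrightarrow> (\<Prod>v\<in>A. sg (f v) (1::'k::comm_ring_1)) = sg (\<Sum>v\<in>A. f v) 1"
  by (induction A rule: finite_induct) (auto simp: mult_single)

lemma mono_decomp:
  "sg m (c::'k::comm_ring_1) = const_poly c * (\<Prod>v\<in>ks m. var_poly v ^ lk m v)"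
proof -
  have "(\<Prod>v\<in>ks m. var_poly v ^ lk m v) = sg m (1::'k)"
    using prod_single1[of "ks m" "\<lambda>v. sg v (lk m v)"] pm_sum_single[of m] by (simp add: var_pow)
  then show ?thesis by (simp add: const_poly_def mult_single)
qed

lemma generation:
  fixes S :: "('v, 'k::comm_ring_1) mpoly set"
  assumes add: "\<And>p q. p \<in> S \<Longrightarrow> q \<in> S \<Longrightarrow> p + q \<in> S"
    and mult: "\<And>p q. p \<in> S \<Longrightarrow> q \<in> S \<Longrightarrow> p * q \<in> S"
    and const: "\<And>c. const_poly c \<in> S"
    and var: "\<And>v. v \<in> V \<Longrightarrow> var_poly v \<in> S"
    and supp: "\<forall>m\<in>ks p. ks m \<subseteq> V"
  shows "p \<in> S"
proof -
  have one: "1 \<in> S" using const[of 1] by (simp add: const_one)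
  have pw: "var_poly v ^ k \<in> S" if "v \<in> V" for v k
    by (induction k) (auto simp: one mult var that)
  have pr: "finite A \<Longrightarrow> A \<subseteq> V \<Longrightarrow> (\<Prod>v\<in>A. var_poly v ^ f v) \<in> S" for A f
    by (induction A rule: finite_induct) (auto simp: one mult pw)
  have mono: "sg m c \<in> S" if "ks m \<subseteq> V" for m c
    unfolding mono_decomp using that by (auto intro!: mult const pr)
  have "(\<Sum>m\<in>A. sg m (lk p m)) \<in> S" if "finite A" "A \<subseteq> ks p" for A
    using that
  proof (induction A rule: finite_induct)
    case empty then show ?case using const[of 0] by (simp add: const_zero)
  next
    case (insert x F) then show ?case using supp by (auto intro!: add mono)
  qed
  then show ?thesis using pm_sum_single[of p] by (metis finite_keys order_refl)
qed

lemma der_agree: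
  fixes d e :: "('v, 'k::comm_ring_1) mpoly \<Rightarrow> ('v, 'k) mpoly"
  assumes "is_derivation d" "is_derivation e" "\<And>v. d (var_poly v) = e (var_poly v)"
  shows "d p = e p"
proof -
  have "p \<in> {p. d p = e p}"
    by (rule generation[where V=UNIV]) (auto simp: assms der_add der_mult der_const)
  then show ?thesis by simp
qed

lemma pderiv_var_var: "pderiv_var v (var_poly w) = (if v = w then 1 else 0)"
  by (auto simp: var_poly_def pderiv_single lookup_single)

lemma der_comb:
  assumes "\<And>v. is_derivation (B v)"
  shows "is_derivation (\<lambda>p. \<Sum>v\<in>UNIV. f v * B v p)"
  unfolding is_derivation_def
proof (intro conjI allI)
  fix p q
  show "(\<Sum>v\<in>UNIV. f v * B v (p + q)) = (\<Sum>v\<in>UNIV. f v * B v p) + (\<Sum>v\<in>UNIV. f v * B v q)"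
    by (simp add: der_add[OF assms] distrib_left sum.distrib)
  show "(\<Sum>v\<in>UNIV. f v * B v (p * q)) = p * (\<Sum>v\<in>UNIV. f v * B v q) + q * (\<Sum>v\<in>UNIV. f v * B v p)"
    by (simp add: der_mult[OF assms] distrib_left sum.distrib sum_distrib_left mult_ac)
next
  fix c p
  show "(\<Sum>v\<in>UNIV. f v * B v (const_poly c * p)) = const_poly c * (\<Sum>v\<in>UNIV. f v * B v p)"
    by (simp only: der_cmult[OF assms] sum_distrib_left; simp only: mult_ac)
qed

lemma der_repr:
  fixes E :: "('v::finite, 'k::comm_ring_1) mpoly \<Rightarrow> ('v, 'k) mpoly"
  assumes "is_derivation E"
  shows "E p = (\<Sum>v\<in>UNIV. E (var_poly v) * pderiv_var v p)"
proof (rule der_agree[OF assms der_comb[of pderiv_var, OF is_derivation_pderiv]])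
  fix w
  show "E (var_poly w) = (\<Sum>v\<in>UNIV. E (var_poly v) * pderiv_var v (var_poly w))"
    by (simp add: pderiv_var_var if_distrib cong: if_cong)
qed




lemma funpow_zero_der: "is_derivation d \<Longrightarrow> (d ^^ m) 0 = 0"
  by (induction m) auto

lemma funpow_add_der: "is_derivation d \<Longrightarrow> (d ^^ m) (p + q) = (d ^^ m) p + (d ^^ m) q"
  by (induction m) (auto simp: der_add)

lemma funpow_mono_der: "is_derivation d \<Longrightarrow> (d ^^ m) p = 0 \<Longrightarrow> m \<le> k \<Longrightarrow> (d ^^ k) p = 0"
  using funpow_add[of "k - m" m d] funpow_zero_der[of d "k - m"]
  by (metis comp_apply le_add_diff_inverse2)

lemma funpow_mult_der:
  assumes d: "is_derivation d"
  shows "(d ^^ a) p = 0 \<Longrightarrow> (d ^^ b) q = 0 \<Longrightarrow> (d ^^ (a + b)) (p * q) = 0"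
proof (induction "a + b" arbitrary: a b p q rule: less_induct)
  case less
  show ?case
  proof (cases "a = 0 \<or> b = 0")
    case True
    then show ?thesis using less.prems funpow_zero_der[OF d] by auto
  next
    case False
    then obtain a' b' where a: "a = Suc a'" and b: "b = Suc b'" by (meson not0_implies_Suc)
    have pa: "(d ^^ a') (d p) = 0" using less.prems(1) a by (simp add: funpow_Suc_right del: funpow.simps)
    have qb: "(d ^^ b') (d q) = 0" using less.prems(2) b by (simp add: funpow_Suc_right del: funpow.simps)
    have 1: "(d ^^ (a + b')) (p * d q) = 0" by (rule less.hyps) (use b less.prems qb in auto)
    have 2: "(d ^^ (a' + b)) (q * d p) = 0"
      using less.hyps[of b a' q "d p"] less.prems pa a by (simp add: add.commute)
    have "(d ^^ (a + b)) (p * q) = (d ^^ (a' + b)) (d (p * q))"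
      using a by (simp add: funpow_Suc_right del: funpow.simps)
    also have "\<dots> = (d ^^ (a + b')) (p * d q) + (d ^^ (a' + b)) (q * d p)"
      using a b by (simp only: der_mult[OF d] funpow_add_der[OF d]) simp
    also have "\<dots> = 0" using 1 2 by simp
    finally show ?thesis .
  qed
qed

lemma nil_gen:
  assumes d: "is_derivation d"
    and var: "\<And>v. v \<in> V \<Longrightarrow> \<exists>m. (d ^^ m) (var_poly v) = 0"
    and supp: "\<forall>m\<in>ks p. ks m \<subseteq> V"
  shows "\<exists>m. (d ^^ m) p = 0"
proof -
  have "p \<in> {p. \<exists>m. (d ^^ m) p = 0}"
  proof (rule generation[OF _ _ _ _ supp])
    fix p q assume "p \<in> {p. \<exists>m. (d ^^ m) p = 0}" "q \<in> {p. \<exists>m. (d ^^ m) p = 0}"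
    then obtain a b where a: "(d ^^ a) p = 0" and b: "(d ^^ b) q = 0" by auto
    show "p * q \<in> {p. \<exists>m. (d ^^ m) p = 0}" using funpow_mult_der[OF d a b] by auto
    have "(d ^^ (a + b)) p = 0" "(d ^^ (a + b)) q = 0"
      using funpow_mono_der[OF d a] funpow_mono_der[OF d b] by auto
    then show "p + q \<in> {p. \<exists>m. (d ^^ m) p = 0}" by (auto simp: funpow_add_der[OF d] intro!: exI[of _ "a+b"])
  next
    fix c show "const_poly c \<in> {p. \<exists>m. (d ^^ m) p = 0}"
      by (auto intro!: exI[of _ 1] simp: der_const[OF d])
  qed (use var in auto)
  then show ?thesis by simp
qed

lemma nil_all:
  assumes d: "is_derivation d" and var: "\<And>v. \<exists>m. (d ^^ m) (var_poly v) = 0"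
  shows "locally_nilpotent d"
  unfolding locally_nilpotent_def
proof
  fix f
  obtain m where "(d ^^ m) f = 0" using nil_gen[OF d, of UNIV f] var by auto
  then have "(d ^^ (m + 1)) f = 0" using funpow_mono_der[OF d, of m f "m+1"] by simp
  then show "\<exists>m\<ge>1. (d ^^ m) f = 0" by (intro exI[of _ "m+1"]) auto
qed




lemma supp_of_pderiv:
  fixes h :: "('v, 'k::field_char_0) mpoly"
  assumes "\<forall>w. w \<noteq> n \<longrightarrow> pderiv_var w h = 0"
  shows "\<forall>m\<in>ks h. ks m \<subseteq> {n}"
proof (intro ballI subsetI)
  fix m w assume m: "m \<in> ks h" and w: "w \<in> ks m"
  show "w \<in> {n}"
  proof (rule ccontr)
    assume "w \<notin> {n}"
    then have "pderiv_var w h = 0" using assms by auto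
    then have "lk (pderiv_var w h) (m - sg w 1) = 0" by simp
    moreover have "lk m w \<noteq> 0" using w by (simp add: in_keys_iff)
    moreover have "lk (m - sg w 1) w + 1 = lk m w" using \<open>lk m w \<noteq> 0\<close>
      by (simp add: lookup_minus lookup_single)
    moreover have "m - sg w 1 + sg w 1 = m" by (rule pm_minus_add) fact
    ultimately have "of_nat (lk m w) * lk h m = (0::'k)"
      by (metis lookup_pderiv)
    then show False using m \<open>lk m w \<noteq> 0\<close> by (simp add: in_keys_iff)
  qed
qed

lemma unit_const:
  fixes u :: "('v, 'k::field) mpoly"
  assumes supp: "\<forall>m\<in>ks u. ks m \<subseteq> {n}" and uw: "u * w = 1"
  shows "u = const_poly (lk u 0)"
proof -
  have mform: "m = sg n (lk m n)" if "m \<in> ks u" for m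
  proof (rule poly_mapping_eqI)
    fix x show "lk m x = lk (sg n (lk m n)) x"
    proof (cases "x = n")
      case False
      then have "x \<notin> ks m" using supp that by blast
      then show ?thesis using False by (simp add: lookup_single in_keys_iff)
    qed simp
  qed
  have u0: "u \<noteq> 0" and w0: "w \<noteq> 0" using uw by auto
  define a where "a = Max ((\<lambda>m. lk m n) ` ks u)"
  define b where "b = Max ((\<lambda>m. lk m n) ` ks w)"
  have "a \<in> (\<lambda>m. lk m n) ` ks u" unfolding a_def using u0 by (intro Max_in) auto
  then obtain ma where ma: "ma \<in> ks u" "lk ma n = a" by auto
  then have maa: "sg n a \<in> ks u" using mform by metis
  have "b \<in> (\<lambda>m. lk m n) ` ks w" unfolding b_def using w0 by (intro Max_in) auto
  then obtain m0 where m0: "m0 \<in> ks w" "lk m0 n = b" by auto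
  have le_a: "lk m n \<le> a" if "m \<in> ks u" for m unfolding a_def using that by (intro Max_ge) auto
  have le_b: "lk m n \<le> b" if "m \<in> ks w" for m unfolding b_def using that by (intro Max_ge) auto
  have trm: "lk (sg m (lk u m) * w) (m0 + sg n a) = (if m = sg n a then lk u m * lk w m0 else 0)"
    if m: "m \<in> ks u" for m
  proof -
    define i where "i = lk m n"
    have mi: "m = sg n i" using mform[OF m] i_def by simp
    have ia: "i \<le> a" using le_a[OF m] i_def by simp
    have "m0 + sg n a = m + (m0 + sg n (a - i))"
      using ia by (simp add: mi add.commute add.left_commute flip: single_add)
    then have "lk (sg m (lk u m) * w) (m0 + sg n a) = lk u m * lk w (m0 + sg n (a - i))"
      by (simp add: lookup_single_mult)
    also have "\<dots> = (if m = sg n a then lk u m * lk w m0 else 0)"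
    proof (cases "i = a")
      case True then show ?thesis by (simp add: mi)
    next
      case False
      then have "i < a" using ia by simp
      then have "\<not> lk (m0 + sg n (a - i)) n \<le> b" using m0 by (simp add: lookup_add)
      then have "m0 + sg n (a - i) \<notin> ks w" using le_b by blast
      moreover have "m \<noteq> sg n a" using mi False by (metis lookup_single_eq)
      ultimately show ?thesis by (simp add: in_keys_iff)
    qed
    finally show ?thesis .
  qed
  have "lk (u * w) (m0 + sg n a) = (\<Sum>m\<in>ks u. lk (sg m (lk u m) * w) (m0 + sg n a))"
    by (subst (1) pm_sum_single[of u, symmetric]) (simp add: sum_distrib_right lookup_sum)
  also have "\<dots> = (\<Sum>m\<in>ks u. if m = sg n a then lk u m * lk w m0 else 0)"
    by (rule sum.cong) (auto simp: trm)
  also have "\<dots> = lk u (sg n a) * lk w m0" using maa by simp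
  finally have "lk (u * w) (m0 + sg n a) \<noteq> 0" using maa m0 by (simp add: in_keys_iff)
  then have "m0 + sg n a = 0" using uw by (simp add: lookup_one when_def split: if_splits)
  then have "lk (m0 + sg n a) n = 0" by simp
  then have a0: "a = 0" by (simp add: lookup_add)
  show ?thesis
  proof (rule poly_mapping_eqI)
    fix k
    show "lk u k = lk (const_poly (lk u 0)) k"
    proof (cases "k \<in> ks u")
      case True
      then have "k = 0" using mform[OF True] le_a[OF True] a0 by (metis le_zero_eq single_zero)
      then show ?thesis by (simp add: const_poly_def)
    next
      case False
      then have "k \<noteq> 0 \<or> lk u k = 0" by (simp add: in_keys_iff)
      then show ?thesis using False by (auto simp: const_poly_def lookup_single in_keys_iff)
    qed
  qed
qed




lemma chain_restricted:
  fixes E :: "('v::finite, 'k::comm_ring_1) mpoly \<Rightarrow> ('v, 'k) mpoly"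
  assumes "is_derivation E" "\<forall>w. w \<noteq> n \<longrightarrow> pderiv_var w h = 0"
  shows "E h = E (var_poly n) * pderiv_var n h"
proof -
  have "E h = (\<Sum>v\<in>UNIV. E (var_poly v) * pderiv_var v h)" by (rule der_repr[OF assms(1)])
  also have "\<dots> = (\<Sum>v\<in>UNIV. if v = n then E (var_poly n) * pderiv_var n h else 0)"
    by (rule sum.cong) (use assms(2) in auto)
  also have "\<dots> = E (var_poly n) * pderiv_var n h" by simp
  finally show ?thesis .
qed

lemma principal_ideal: "is_ideal {(g::'a::comm_ring_1) * a | a. True}"
  unfolding is_ideal_def
proof (intro conjI ballI allI)
  show "0 \<in> {g * a | a. True}" by (rule CollectI, rule exI[of _ 0]) simp
  fix x y assume "x \<in> {g * a | a. True}" "y \<in> {g * a | a. True}"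
  then obtain a b where "x = g * a" "y = g * b" by auto
  then show "x + y \<in> {g * a | a. True}" by (intro CollectI exI[of _ "a + b"]) (simp add: distrib_left)
next
  fix r x assume "x \<in> {g * a | a. True}"
  then obtain a where "x = g * a" by auto
  then show "r * x \<in> {g * a | a. True}" by (intro CollectI exI[of _ "r * a"]) (simp add: mult.left_commute)
qed

theorem corollary2p8:
  fixes D :: "(('v::finite, 'k::field_char_0) mpoly \<Rightarrow> ('v, 'k) mpoly) set"
    and vn :: 'v
  assumes derivs: "\<forall>d\<in>D. is_derivation d"
    and comm: "\<forall>d1\<in>D. \<forall>d2\<in>D. d1 \<circ> d2 = d2 \<circ> d1"
    and simple: "D_simple D"
    and partials: "\<forall>v. v \<noteq> vn \<longrightarrow> pderiv_var v \<in> D"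
    and JC: "jacobian_conjecture TYPE('v) TYPE('k)"
  shows "\<exists>d\<in>D. locally_nilpotent_commutative_basis
                 (\<lambda>v. if v = vn then d else pderiv_var v)
             \<and> locally_nilpotent d"
proof -
  have comm_app: "d1 (d2 p) = d2 (d1 p)" if "d1 \<in> D" "d2 \<in> D" for d1 d2 p
  proof -
    have "d1 \<circ> d2 = d2 \<circ> d1" using comm that by blast
    then show ?thesis by (simp add: fun_eq_iff)
  qed
  have kx: "pderiv_var w (d (var_poly v)) = 0" if "d \<in> D" "w \<noteq> vn" for d w v
  proof -
    have "pderiv_var w (d (var_poly v)) = d (pderiv_var w (var_poly v))"
      using comm_app[of "pderiv_var w" d] that partials by auto
    also have "\<dots> = 0" using derivs that by (auto simp: pderiv_var_var der_one)
    finally show ?thesis .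
  qed
  have simp': "I = {0} \<or> I = UNIV" if "is_ideal I" "\<forall>d\<in>D. d ` I \<subseteq> I" for I
    using simple that unfolding D_simple_def by blast
  have pn_nz: "var_poly vn \<noteq> (0::('v, 'k) mpoly)"
  proof
    assume "var_poly vn = (0::('v, 'k) mpoly)"
    then have "pderiv_var vn (var_poly vn) = (0::('v, 'k) mpoly)" by simp
    then show False by (simp add: pderiv_var_var)
  qed
  have key: "\<exists>d0\<in>D. \<exists>c. c \<noteq> 0 \<and> d0 (var_poly vn) = const_poly c"
  proof (cases "\<exists>d0\<in>D. d0 (var_poly vn) \<noteq> 0")
    case True
    then obtain d0 where d0: "d0 \<in> D" "d0 (var_poly vn) \<noteq> 0" by auto
    define g0 where "g0 = d0 (var_poly vn)"
    define I where "I = {g0 * a | a. True}"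
    have "is_ideal I" unfolding I_def by (rule principal_ideal)
    moreover have "\<forall>e\<in>D. e ` I \<subseteq> I"
    proof (intro ballI subsetI)
      fix e x assume e: "e \<in> D" and "x \<in> e ` I"
      then obtain a where x: "x = e (g0 * a)" unfolding I_def by auto
      have "e g0 = d0 (e (var_poly vn))" unfolding g0_def using comm_app[OF e d0(1)] by simp
      also have "\<dots> = g0 * pderiv_var vn (e (var_poly vn))"
        unfolding g0_def by (rule chain_restricted) (use derivs d0 kx e in auto)
      finally have eg: "e g0 = g0 * pderiv_var vn (e (var_poly vn))" .
      have "x = g0 * e a + a * (g0 * pderiv_var vn (e (var_poly vn)))"
        using x der_mult[of e g0 a] derivs e eg by simp
      also have "\<dots> = g0 * (e a + a * pderiv_var vn (e (var_poly vn)))"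
        by (simp add: distrib_left mult.left_commute)
      finally have "x = g0 * (e a + a * pderiv_var vn (e (var_poly vn)))" .
      then show "x \<in> I" unfolding I_def by auto
    qed
    ultimately have "I = {0} \<or> I = UNIV" by (rule simp')
    moreover have "g0 \<in> I" unfolding I_def by (auto intro: exI[of _ 1])
    ultimately have "1 \<in> I" using d0 g0_def by auto
    then obtain a where ga: "g0 * a = 1" unfolding I_def by auto
    have "\<forall>m\<in>ks g0. ks m \<subseteq> {vn}" unfolding g0_def
      by (rule supp_of_pderiv) (use kx d0 in auto)
    from unit_const[OF this ga] have "g0 = const_poly (lk g0 0)" .
    moreover have "lk g0 0 \<noteq> 0" using calculation d0 g0_def by (metis const_zero)
    ultimately show ?thesis using d0 g0_def by (intro bexI[of _ d0] exI[of _ "lk g0 0"]) auto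
  next
    case False
    define I where "I = {(var_poly vn :: ('v, 'k) mpoly) * a | a. True}"
    have "is_ideal I" unfolding I_def by (rule principal_ideal)
    moreover have "\<forall>e\<in>D. e ` I \<subseteq> I"
    proof (intro ballI subsetI)
      fix e x assume e: "e \<in> D" and "x \<in> e ` I"
      then obtain a where x: "x = e (var_poly vn * a)" unfolding I_def by auto
      then have "x = var_poly vn * e a"
        using der_mult[of e "var_poly vn" a] derivs e False by auto
      then show "x \<in> I" unfolding I_def by auto
    qed
    ultimately have "I = {0} \<or> I = UNIV" by (rule simp')
    moreover have "var_poly vn \<in> I" unfolding I_def by (auto intro: exI[of _ 1])
    ultimately have "1 \<in> I" using pn_nz by auto
    then obtain a :: "('v, 'k) mpoly" where ga: "var_poly vn * a = 1" unfolding I_def by auto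
    have "\<forall>m\<in>ks (var_poly vn :: ('v, 'k) mpoly). ks m \<subseteq> {vn}"
      by (rule supp_of_pderiv) (auto simp: pderiv_var_var)
    from unit_const[OF this ga] have "var_poly vn = (const_poly (lk (var_poly vn) 0) :: ('v, 'k) mpoly)" .
    then have "pderiv_var vn (var_poly vn) = pderiv_var vn (const_poly (lk (var_poly vn :: ('v, 'k) mpoly) 0))"
      by simp
    then show ?thesis by (simp add: pderiv_var_var der_const[OF is_derivation_pderiv])
  qed
  then obtain d0 c where d0: "d0 \<in> D" "c \<noteq> 0" "d0 (var_poly vn) = const_poly c" by blast
  have d0der: "is_derivation d0" using derivs d0 by auto
  define B where "B = (\<lambda>v. if v = vn then d0 else pderiv_var v)"
  have BD: "B v \<in> D" for v using d0 partials by (auto simp: B_def)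
  have Bder: "is_derivation (B v)" for v using BD derivs by auto
  have nil_kn: "\<exists>m. (d0 ^^ m) h = 0" if "\<forall>w. w \<noteq> vn \<longrightarrow> pderiv_var w h = 0" for h
  proof (rule nil_gen[OF d0der, of "{vn}"])
    show "\<forall>m\<in>ks h. ks m \<subseteq> {vn}" by (rule supp_of_pderiv) (use that in auto)
    show "\<exists>m. (d0 ^^ m) (var_poly v) = 0" if "v \<in> {vn}" for v
      using that d0 by (intro exI[of _ 2]) (auto simp: numeral_2_eq_2 der_const[OF d0der])
  qed
  have ln0: "locally_nilpotent d0"
  proof (rule nil_all[OF d0der])
    fix v
    obtain m where "(d0 ^^ m) (d0 (var_poly v)) = 0" using nil_kn[of "d0 (var_poly v)"] kx[OF d0(1)] by blast
    then show "\<exists>m. (d0 ^^ m) (var_poly v) = 0"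
      by (intro exI[of _ "Suc m"]) (simp add: funpow_Suc_right del: funpow.simps)
  qed
  have lnB: "locally_nilpotent (B v)" for v
  proof (cases "v = vn")
    case True then show ?thesis using ln0 by (simp add: B_def)
  next
    case False
    have "locally_nilpotent (pderiv_var v :: ('v, 'k) mpoly \<Rightarrow> _)"
    proof (rule nil_all[OF is_derivation_pderiv])
      fix w
      show "\<exists>m. (pderiv_var v ^^ m) (var_poly w :: ('v, 'k) mpoly) = 0"
        by (intro exI[of _ 2])
          (auto simp: numeral_2_eq_2 pderiv_var_var der_one[OF is_derivation_pderiv])
    qed
    then show ?thesis using False by (simp add: B_def)
  qed
  have eval: "(\<Sum>v\<in>UNIV. f v * B v (var_poly w)) =
      (if w = vn then f vn * const_poly c else f vn * d0 (var_poly w) + f w)" for f w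
  proof -
    have "(\<Sum>v\<in>UNIV. f v * B v (var_poly w)) = f vn * d0 (var_poly w) +
        (\<Sum>v\<in>UNIV - {vn}. f v * B v (var_poly w))"
      by (subst sum.remove[of UNIV vn]) (auto simp: B_def)
    also have "(\<Sum>v\<in>UNIV - {vn}. f v * B v (var_poly w)) =
        (\<Sum>v\<in>UNIV - {vn}. if v = w then f w else 0)"
      by (rule sum.cong) (auto simp: B_def pderiv_var_var)
    also have "\<dots> = (if w = vn then 0 else f w)" by simp
    finally show ?thesis using d0 by simp
  qed
  define ic :: "('v, 'k) mpoly" where "ic = const_poly (inverse c)"
  have icc: "ic * const_poly c = 1" using d0 by (simp add: ic_def const_mult_const const_one)
  have basis: "is_Der_basis B"
    unfolding is_Der_basis_def
  proof (intro conjI allI impI Bder)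
    fix E :: "('v, 'k) mpoly \<Rightarrow> ('v, 'k) mpoly"
    assume E: "is_derivation E"
    define f where "f = (\<lambda>v. if v = vn then ic * E (var_poly vn)
                           else E (var_poly v) - ic * E (var_poly vn) * d0 (var_poly v))"
    have ex: "E = (\<lambda>p. \<Sum>v\<in>UNIV. f v * B v p)"
    proof
      fix p
      show "E p = (\<Sum>v\<in>UNIV. f v * B v p)"
      proof (rule der_agree[OF E der_comb[OF Bder]])
        fix w
        show "E (var_poly w) = (\<Sum>v\<in>UNIV. f v * B v (var_poly w))"
        proof (cases "w = vn")
          case True
          have "E (var_poly vn) = (ic * const_poly c) * E (var_poly vn)" using icc by simp
          also have "\<dots> = ic * E (var_poly vn) * const_poly c" by (simp add: mult_ac)
          finally show ?thesis unfolding eval using True by (simp add: f_def)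
        next
          case False
          then show ?thesis unfolding eval by (simp add: f_def)
        qed
      qed
    qed
    have uniq: "g = f" if "E = (\<lambda>p. \<Sum>v\<in>UNIV. g v * B v p)" for g
    proof -
      have e: "(\<Sum>v\<in>UNIV. g v * B v (var_poly w)) = (\<Sum>v\<in>UNIV. f v * B v (var_poly w))" for w
        using fun_cong[OF trans[OF sym[OF that] ex], of "var_poly w"] by simp
      have "g vn * const_poly c = f vn * const_poly c" using e[of vn] by (simp add: eval)
      then have "g vn * const_poly c * ic = f vn * const_poly c * ic" by simp
      have ci: "const_poly c * ic = 1" using icc by (simp add: mult.commute)
      have "g vn = g vn * (const_poly c * ic)" by (simp add: ci)
      also have "\<dots> = g vn * const_poly c * ic" by (rule mult.assoc[symmetric])
      also have "\<dots> = f vn * const_poly c * ic" by fact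
      also have "\<dots> = f vn * (const_poly c * ic)" by (rule mult.assoc)
      also have "\<dots> = f vn" by (simp add: ci)
      finally have gn: "g vn = f vn" .
      show "g = f"
      proof
        fix w show "g w = f w"
        proof (cases "w = vn")
          case True then show ?thesis using gn by simp
        next
          case False then show ?thesis using e[of w] gn by (simp add: eval)
        qed
      qed
    qed
    show "\<exists>!f. E = (\<lambda>p. \<Sum>v\<in>UNIV. f v * B v p)"
      by (rule ex1I[of _ f], rule ex, rule uniq)
  qed
  have "locally_nilpotent_commutative_basis B"
    unfolding locally_nilpotent_commutative_basis_def
    by (intro conjI allI basis lnB) (rule comm[rule_format, OF BD BD])
  then show ?thesis unfolding B_def by (intro bexI[of _ d0] conjI ln0 d0(1))
qed


end
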